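(* Let $\Omega$ be a finite set, $G\le\mathrm{Sym}(\Omega)$ and $1\le k\le |\Omega|$. The following are equivalent: (1) $G$ has the ordered $k$-ut property; (2) for every transformation $t\in T(\Omega)$ of rank $k$, $\langle G,t\rangle=EG$, where $E$ is the set of idempotents of $\langle G,t\rangle$.
   Context: $T(\Omega)$ is the full transformation monoid on $\Omega$, with maps acting on the right; the rank of $t$ is $|\Omega t|$. $\langle G,t\rangle$ is the subsemigroup generated by $G\cup\{t\}$ and $EG=\{eg:e\in E, g\in G\}$. $G$ has the ordered $k$-ut property if for every $k$-tuple $(a_1,\dots,a_k)$ of distinct points of $\Omega$ and every ordered partition $(P_1,\dots,P_k)$ of $\Omega$ into $k$ nonempty parts there is $g\in G$ with $a_ig\in P_i$ for all $i$. *)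

theory Defs
  imports "HOL-Algebra.Bij" "HOL-Library.FuncSet"
begin

text \<open>Transformations of Omega are represented as extensional maps Omega to Omega
 (the elements of extensional_funcset Omega Omega), as in HOL-Algebra's BijGroup.
 Maps act on the right, so the semigroup product s t (first s, then t) is
 compose Omega t s.\<close>

definition rmult :: "'a set \<Rightarrow> ('a \<Rightarrow> 'a) \<Rightarrow> ('a \<Rightarrow> 'a) \<Rightarrow> ('a \<Rightarrow> 'a)" where
  "rmult \<Omega> s t = compose \<Omega> t s"

inductive_set gen_semigroup :: "'a set \<Rightarrow> ('a \<Rightarrow> 'a) set \<Rightarrow> ('a \<Rightarrow> 'a) set"
  for \<Omega> :: "'a set" and S :: "('a \<Rightarrow> 'a) set" where
  gen_base: "s \<in> S \<Longrightarrow> s \<in> gen_semigroup \<Omega> S"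
| gen_mult: "a \<in> gen_semigroup \<Omega> S \<Longrightarrow> b \<in> gen_semigroup \<Omega> S \<Longrightarrow>
      rmult \<Omega> a b \<in> gen_semigroup \<Omega> S"

definition idempotents :: "'a set \<Rightarrow> ('a \<Rightarrow> 'a) set \<Rightarrow> ('a \<Rightarrow> 'a) set" where
  "idempotents \<Omega> S = {e \<in> S. rmult \<Omega> e e = e}"

definition setprod :: "'a set \<Rightarrow> ('a \<Rightarrow> 'a) set \<Rightarrow> ('a \<Rightarrow> 'a) set \<Rightarrow> ('a \<Rightarrow> 'a) set" where
  "setprod \<Omega> E G = {rmult \<Omega> e g | e g. e \<in> E \<and> g \<in> G}"

definition rank :: "'a set \<Rightarrow> ('a \<Rightarrow> 'a) \<Rightarrow> nat" where
  "rank \<Omega> t = card (t ` \<Omega>)"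

definition ordered_ut :: "'a set \<Rightarrow> ('a \<Rightarrow> 'a) set \<Rightarrow> nat \<Rightarrow> bool" where
  "ordered_ut \<Omega> G k \<longleftrightarrow>
    (\<forall>a P. (\<forall>i<k. a i \<in> \<Omega>) \<and> inj_on a {0..<k}
       \<and> (\<forall>i<k. P i \<noteq> {}) \<and> (\<forall>i<k. \<forall>j<k. i \<noteq> j \<longrightarrow> P i \<inter> P j = {})
       \<and> (\<Union>i<k. P i) = \<Omega>
     \<longrightarrow> (\<exists>g\<in>G. \<forall>i<k. g (a i) \<in> P i))"

end

theory Submission
  imports Defs
begin

lemma carrier_Bij: "carrier (BijGroup \<Omega>) = Bij \<Omega>"
  by (simp add: BijGroup_def)

lemma mult_Bij: "a \<in> Bij \<Omega> \<Longrightarrow> b \<in> Bij \<Omega> \<Longrightarrow> a \<otimes>\<^bsub>BijGroup \<Omega>\<^esub> b = compose \<Omega> a b"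
  by (simp add: BijGroup_def)

lemma one_Bij: "\<one>\<^bsub>BijGroup \<Omega>\<^esub> = (\<lambda>x\<in>\<Omega>. x)"
  by (simp add: BijGroup_def)

lemma G_props:
  assumes "subgroup G (BijGroup \<Omega>)" "g \<in> G"
  shows "g \<in> \<Omega> \<rightarrow>\<^sub>E \<Omega>" "bij_betw g \<Omega> \<Omega>"
    "\<exists>h\<in>G. (\<forall>x\<in>\<Omega>. h (g x) = x) \<and> (\<forall>y\<in>\<Omega>. g (h y) = y)"
proof -
  interpret grp: group "BijGroup \<Omega>" by (rule group_BijGroup)
  have gc: "g \<in> carrier (BijGroup \<Omega>)" using subgroup.subset[OF assms(1)] assms(2) by blast
  have gB: "g \<in> Bij \<Omega>" using gc carrier_Bij by blast
  then show "g \<in> \<Omega> \<rightarrow>\<^sub>E \<Omega>" "bij_betw g \<Omega> \<Omega>"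
    using Bij_imp_funcset Bij_imp_extensional by (auto simp: Bij_def PiE_iff)
  define h where "h = inv\<^bsub>BijGroup \<Omega>\<^esub> g"
  have hG: "h \<in> G" unfolding h_def by (rule subgroup.m_inv_closed[OF assms])
  have hc: "h \<in> carrier (BijGroup \<Omega>)" unfolding h_def using gc by simp
  have hB: "h \<in> Bij \<Omega>" using hc carrier_Bij by blast
  have 1: "compose \<Omega> h g = (\<lambda>x\<in>\<Omega>. x)"
    using grp.l_inv[OF gc] mult_Bij[OF hB gB] one_Bij unfolding h_def by simp
  have 2: "compose \<Omega> g h = (\<lambda>x\<in>\<Omega>. x)"
    using grp.r_inv[OF gc] mult_Bij[OF gB hB] one_Bij unfolding h_def by simp
  have "\<forall>x\<in>\<Omega>. h (g x) = x"
  proof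
    fix x assume x: "x \<in> \<Omega>"
    have "compose \<Omega> h g x = x" using 1 x by (metis restrict_apply')
    then show "h (g x) = x" using x by (simp add: compose_eq)
  qed
  moreover have "\<forall>x\<in>\<Omega>. g (h x) = x"
  proof
    fix x assume x: "x \<in> \<Omega>"
    have "compose \<Omega> g h x = x" using 2 x by (metis restrict_apply')
    then show "g (h x) = x" using x by (simp add: compose_eq)
  qed
  ultimately show "\<exists>h\<in>G. (\<forall>x\<in>\<Omega>. h (g x) = x) \<and> (\<forall>y\<in>\<Omega>. g (h y) = y)" using hG by blast
qed

lemma G_mult:
  assumes "subgroup G (BijGroup \<Omega>)" "a \<in> G" "b \<in> G"
  shows "rmult \<Omega> a b \<in> G"
proof -
  have "b \<otimes>\<^bsub>BijGroup \<Omega>\<^esub> a \<in> G" by (rule subgroup.m_closed[OF assms(1,3,2)])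
  moreover have "a \<in> Bij \<Omega>" "b \<in> Bij \<Omega>" using subgroup.subset[OF assms(1)] assms(2,3) carrier_Bij by blast+
  ultimately show ?thesis using mult_Bij[of b \<Omega> a] by (simp add: rmult_def)
qed

lemma G_one:
  assumes "subgroup G (BijGroup \<Omega>)"
  shows "(\<lambda>x\<in>\<Omega>. x) \<in> G"
  using subgroup.one_closed[OF assms] one_Bij by metis

lemma rmult_in: "x \<in> \<Omega> \<Longrightarrow> rmult \<Omega> a b x = b (a x)"
  by (simp add: rmult_def compose_eq)

lemma rmult_out: "x \<notin> \<Omega> \<Longrightarrow> rmult \<Omega> a b x = undefined"
  by (simp add: rmult_def compose_def)

lemma ut_down:
  assumes fin: "finite \<Omega>" and sg: "subgroup G (BijGroup \<Omega>)"
    and ut: "ordered_ut \<Omega> G (Suc k)" and le: "Suc k \<le> card \<Omega>"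
  shows "ordered_ut \<Omega> G k"
  unfolding ordered_ut_def
proof (intro allI impI)
  fix a P
  assume A: "(\<forall>i<k. a i \<in> \<Omega>) \<and> inj_on a {0..<k} \<and> (\<forall>i<k. P i \<noteq> {}) \<and>
    (\<forall>i<k. \<forall>j<k. i \<noteq> j \<longrightarrow> P i \<inter> P j = {}) \<and> (\<Union>i<k. P i) = \<Omega>"
  then have aO: "\<And>i. i<k \<Longrightarrow> a i \<in> \<Omega>" and ainj: "inj_on a {0..<k}"
    and Pne: "\<And>i. i<k \<Longrightarrow> P i \<noteq> {}"
    and Pdis: "\<And>i j. i<k \<Longrightarrow> j<k \<Longrightarrow> i \<noteq> j \<Longrightarrow> P i \<inter> P j = {}"
    and Pun: "(\<Union>i<k. P i) = \<Omega>" by auto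
  have PO: "\<And>i. i<k \<Longrightarrow> P i \<subseteq> \<Omega>" using Pun by blast
  have "\<exists>j<k. \<exists>x\<in>P j. \<exists>y\<in>P j. x \<noteq> y"
  proof (rule ccontr)
    assume "\<not> ?thesis"
    then have "\<And>i. i \<in> {..<k} \<Longrightarrow> card (P i) \<le> 1"
    proof -
      fix i assume i: "i \<in> {..<k}" and nt: "\<not> (\<exists>j<k. \<exists>x\<in>P j. \<exists>y\<in>P j. x \<noteq> y)"
      have "finite (P i)" using PO[of i] i fin finite_subset by blast
      then show "card (P i) \<le> 1" using nt i by (subst One_nat_def, subst card_le_Suc0_iff_eq) auto
    qed
    then have "(\<Sum>i<k. card (P i)) \<le> card {..<k} * 1"
      by (metis sum_bounded_above of_nat_id)
    moreover have "card \<Omega> \<le> (\<Sum>i<k. card (P i))"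
      using card_UN_le[of "{..<k}" P] Pun by simp
    ultimately show False using le by simp
  qed
  then obtain j x y where j: "j < k" and xy: "x \<in> P j" "y \<in> P j" "x \<noteq> y" by blast
  have "card (a ` {0..<k}) = k" using card_image[OF ainj] by simp
  then have "\<not> \<Omega> \<subseteq> a ` {0..<k}" using le fin card_mono[of "a ` {0..<k}" \<Omega>] by auto
  then obtain b where b: "b \<in> \<Omega>" "b \<notin> a ` {0..<k}" by blast
  define a' where "a' = a(k := b)"
  define P' where "P' = (\<lambda>i. if i = j then {x} else if i = k then P j - {x} else P i)"
  have "\<exists>g\<in>G. \<forall>i<Suc k. g (a' i) \<in> P' i"
  proof -
    have c1: "\<forall>i<Suc k. a' i \<in> \<Omega>" using aO b by (auto simp: a'_def less_Suc_eq)
    have c2: "inj_on a' {0..<Suc k}"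
      using ainj b unfolding inj_on_def a'_def by (auto simp: less_Suc_eq)
    have c3: "\<forall>i<Suc k. P' i \<noteq> {}" using Pne xy by (auto simp: P'_def less_Suc_eq)
    have c4: "\<forall>i<Suc k. \<forall>i'<Suc k. i \<noteq> i' \<longrightarrow> P' i \<inter> P' i' = {}"
    proof (intro allI impI)
      fix i i' assume "i < Suc k" "i' < Suc k" "i \<noteq> i'"
      then show "P' i \<inter> P' i' = {}"
        using Pdis[of i i'] Pdis[of j i'] Pdis[of i j] j xy
        by (auto simp: P'_def less_Suc_eq)
    qed
    have c5: "(\<Union>i<Suc k. P' i) = \<Omega>"
    proof
      show "(\<Union>i<Suc k. P' i) \<subseteq> \<Omega>" using PO j xy by (auto simp: P'_def less_Suc_eq) (use PO in blast)
      show "\<Omega> \<subseteq> (\<Union>i<Suc k. P' i)"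
      proof
        fix z assume "z \<in> \<Omega>"
        then obtain i where i: "i < k" "z \<in> P i" using Pun by blast
        show "z \<in> (\<Union>i<Suc k. P' i)"
        proof (cases "i = j")
          case True
          then show ?thesis using i j
            by (cases "z = x") (auto simp: P'_def intro!: bexI[of _ j] bexI[of _ k])
        next
          case False
          then show ?thesis using i by (auto simp: P'_def intro!: bexI[of _ i])
        qed
      qed
    qed
    show ?thesis using ut c1 c2 c3 c4 c5 unfolding ordered_ut_def by blast
  qed
  then obtain g where g: "g \<in> G" "\<forall>i<Suc k. g (a' i) \<in> P' i" by blast
  have "\<forall>i<k. g (a i) \<in> P i"
  proof (intro allI impI)
    fix i assume i: "i < k"
    then have "g (a' i) \<in> P' i" using g by simp
    then show "g (a i) \<in> P i" using i xy by (auto simp: a'_def P'_def split: if_splits)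
  qed
  then show "\<exists>g\<in>G. \<forall>i<k. g (a i) \<in> P i" using g by blast
qed

lemma ut_mono:
  assumes fin: "finite \<Omega>" and sg: "subgroup G (BijGroup \<Omega>)"
  shows "ordered_ut \<Omega> G (m + d) \<Longrightarrow> m + d \<le> card \<Omega> \<Longrightarrow> ordered_ut \<Omega> G m"
proof (induction d)
  case 0
  then show ?case by simp
next
  case (Suc d)
  have "ordered_ut \<Omega> G (m + d)"
    using ut_down[OF fin sg, of "m + d"] Suc.prems by simp
  then show ?case using Suc by simp
qed

lemma S_props:
  assumes fin: "finite \<Omega>" and sg: "subgroup G (BijGroup \<Omega>)" and t: "t \<in> \<Omega> \<rightarrow>\<^sub>E \<Omega>"
  shows "s \<in> gen_semigroup \<Omega> (G \<union> {t}) \<Longrightarrow>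
    s \<in> \<Omega> \<rightarrow>\<^sub>E \<Omega> \<and> (s \<in> G \<or> card (s ` \<Omega>) \<le> card (t ` \<Omega>))"
proof (induction rule: gen_semigroup.induct)
  case (gen_base s)
  then show ?case using G_props[OF sg] t by auto
next
  case (gen_mult a b)
  have aE: "a \<in> \<Omega> \<rightarrow>\<^sub>E \<Omega>" and bE: "b \<in> \<Omega> \<rightarrow>\<^sub>E \<Omega>" using gen_mult.IH by auto
  have E: "rmult \<Omega> a b \<in> \<Omega> \<rightarrow>\<^sub>E \<Omega>"
    using aE bE by (auto simp: PiE_iff rmult_def compose_eq)
  have img: "rmult \<Omega> a b ` \<Omega> = b ` (a ` \<Omega>)" by (auto simp: rmult_in)
  have sub: "a ` \<Omega> \<subseteq> \<Omega>" using aE by (auto simp: PiE_iff)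
  have c1: "card (b ` (a ` \<Omega>)) \<le> card (a ` \<Omega>)" using fin by (simp add: card_image_le)
  have c2: "card (b ` (a ` \<Omega>)) \<le> card (b ` \<Omega>)"
    using fin sub by (intro card_mono) auto
  show ?case
  proof (cases "a \<in> G \<and> b \<in> G")
    case True
    then show ?thesis using E G_mult[OF sg] by blast
  next
    case False
    then have "card (a ` \<Omega>) \<le> card (t ` \<Omega>) \<or> card (b ` \<Omega>) \<le> card (t ` \<Omega>)"
      using gen_mult.IH by blast
    then show ?thesis using E img c1 c2 by auto
  qed
qed

theorem lemma3p1:
  fixes \<Omega> :: "'a set" and G :: "('a \<Rightarrow> 'a) set" and k :: nat
  assumes "finite \<Omega>"
    and "subgroup G (BijGroup \<Omega>)"
    and "1 \<le> k" and "k \<le> card \<Omega>"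
  shows "ordered_ut \<Omega> G k \<longleftrightarrow>
    (\<forall>t \<in> \<Omega> \<rightarrow>\<^sub>E \<Omega>. rank \<Omega> t = k \<longrightarrow>
       gen_semigroup \<Omega> (G \<union> {t}) =
         setprod \<Omega> (idempotents \<Omega> (gen_semigroup \<Omega> (G \<union> {t}))) G)"
proof
  note fin = assms(1) and sg = assms(2)
  assume ut: "ordered_ut \<Omega> G k"
  show "\<forall>t \<in> \<Omega> \<rightarrow>\<^sub>E \<Omega>. rank \<Omega> t = k \<longrightarrow>
       gen_semigroup \<Omega> (G \<union> {t}) =
         setprod \<Omega> (idempotents \<Omega> (gen_semigroup \<Omega> (G \<union> {t}))) G"
  proof (intro ballI impI)
    fix t assume t: "t \<in> \<Omega> \<rightarrow>\<^sub>E \<Omega>" and rk: "rank \<Omega> t = k"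
    define S where "S = gen_semigroup \<Omega> (G \<union> {t})"
    have GS: "G \<subseteq> S" unfolding S_def by (auto intro: gen_semigroup.gen_base)
    show "gen_semigroup \<Omega> (G \<union> {t}) = setprod \<Omega> (idempotents \<Omega> (gen_semigroup \<Omega> (G \<union> {t}))) G"
      unfolding S_def[symmetric]
    proof
      show "setprod \<Omega> (idempotents \<Omega> S) G \<subseteq> S"
        using GS unfolding setprod_def idempotents_def S_def
        by (auto intro: gen_semigroup.gen_mult)
      show "S \<subseteq> setprod \<Omega> (idempotents \<Omega> S) G"
      proof
        fix s assume sS: "s \<in> S"
        have sP: "s \<in> \<Omega> \<rightarrow>\<^sub>E \<Omega> \<and> (s \<in> G \<or> card (s ` \<Omega>) \<le> k)"
          using S_props[OF fin sg t] sS rk unfolding S_def rank_def by blast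
        then have sE: "s \<in> \<Omega> \<rightarrow>\<^sub>E \<Omega>" by blast
        show "s \<in> setprod \<Omega> (idempotents \<Omega> S) G"
        proof (cases "s \<in> G")
          case True
          define e where "e = (\<lambda>x\<in>\<Omega>. x)"
          have eS: "e \<in> S" using G_one[OF sg] GS unfolding e_def by blast
          have "rmult \<Omega> e e = e"
          proof (rule ext)
            fix x show "rmult \<Omega> e e x = e x"
            proof (cases "x \<in> \<Omega>")
              case True
              then show ?thesis by (simp only: rmult_in e_def restrict_apply')
            next
              case False
              then show ?thesis by (simp add: rmult_out e_def)
            qed
          qed
          moreover have "rmult \<Omega> e s = s"
          proof (rule ext)
            fix x show "rmult \<Omega> e s x = s x"
            proof (cases "x \<in> \<Omega>")
              case True
              then show ?thesis by (simp only: rmult_in e_def restrict_apply')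
            next
              case False
              then show ?thesis using PiE_arb[OF sE False] by (simp add: rmult_out)
            qed
          qed
          ultimately show ?thesis using eS True unfolding setprod_def idempotents_def
            by (intro CollectI exI[of _ e] exI[of _ s]) auto
        next
          case False
          then have m: "card (s ` \<Omega>) \<le> k" using sP by blast
          define m where "m = card (s ` \<Omega>)"
          have utm: "ordered_ut \<Omega> G m"
            using ut_mono[OF fin sg, of m "k - m"] ut m assms(4) unfolding m_def by simp
          obtain a where a: "bij_betw a {0..<m} (s ` \<Omega>)"
            using ex_bij_betw_nat_finite[OF finite_imageI[OF fin, of s]] unfolding m_def by blast
          define P where "P = (\<lambda>i. {x \<in> \<Omega>. s x = a i})"
          have sO: "s ` \<Omega> \<subseteq> \<Omega>" using sE by (auto simp: PiE_iff)
          have aim: "a ` {0..<m} = s ` \<Omega>" and ainj: "inj_on a {0..<m}"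
            using a by (auto simp: bij_betw_def)
          have "\<exists>h\<in>G. \<forall>i<m. h (a i) \<in> P i"
          proof -
            have ai: "\<And>i. i < m \<Longrightarrow> a i \<in> s ` \<Omega>"
            proof -
              fix i assume "i < m"
              then have "a i \<in> a ` {0..<m}" by simp
              then show "a i \<in> s ` \<Omega>" using aim by simp
            qed
            have c1: "\<forall>i<m. a i \<in> \<Omega>" using ai sO by blast
            have c3: "\<forall>i<m. P i \<noteq> {}"
            proof (intro allI impI)
              fix i assume "i < m"
              then have "a i \<in> s ` \<Omega>" using ai by blast
              then show "P i \<noteq> {}" unfolding P_def by auto
            qed
            have c4: "\<forall>i<m. \<forall>j<m. i \<noteq> j \<longrightarrow> P i \<inter> P j = {}"
              using ainj unfolding P_def inj_on_def by auto
            have c5: "(\<Union>i<m. P i) = \<Omega>"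
            proof
              show "(\<Union>i<m. P i) \<subseteq> \<Omega>" unfolding P_def by auto
              show "\<Omega> \<subseteq> (\<Union>i<m. P i)"
              proof
                fix x assume x: "x \<in> \<Omega>"
                then have "s x \<in> a ` {0..<m}" unfolding aim by simp
                then obtain i where "i < m" "s x = a i" by auto
                then show "x \<in> (\<Union>i<m. P i)" using x unfolding P_def by auto
              qed
            qed
            show ?thesis using utm[unfolded ordered_ut_def, rule_format, of a P] c1 ainj c3 c4 c5 by blast
          qed
          then obtain h where hG: "h \<in> G" and hP: "\<forall>i<m. h (a i) \<in> P i" by blast
          have key: "\<And>y. y \<in> s ` \<Omega> \<Longrightarrow> h y \<in> \<Omega> \<and> s (h y) = y"
          proof -
            fix y assume "y \<in> s ` \<Omega>"
            then obtain i where "i < m" "y = a i" using aim by (metis atLeastLessThan_iff imageE)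
            then show "h y \<in> \<Omega> \<and> s (h y) = y" using hP unfolding P_def by auto
          qed
          obtain g where gG: "g \<in> G" and gh: "\<forall>x\<in>\<Omega>. g (h x) = x"
            using G_props(3)[OF sg hG] by blast
          define e where "e = rmult \<Omega> s h"
          have eS: "e \<in> S" unfolding e_def S_def
            using sS hG GS unfolding S_def by (auto intro: gen_semigroup.gen_mult)
          have ein: "\<And>x. x \<in> \<Omega> \<Longrightarrow> e x = h (s x) \<and> e x \<in> \<Omega>"
            using key unfolding e_def by (auto simp: rmult_in)
          have "rmult \<Omega> e e = e"
          proof (rule ext)
            fix x show "rmult \<Omega> e e x = e x"
            proof (cases "x \<in> \<Omega>")
              case True
              then have "rmult \<Omega> e e x = e (e x)" by (simp add: rmult_in)
              also have "\<dots> = h (s (h (s x)))" using ein[OF True] ein[of "e x"] True by metis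
              also have "\<dots> = h (s x)" using key[of "s x"] True by auto
              finally show ?thesis using ein[OF True] by simp
            next
              case False
              then show ?thesis by (simp add: rmult_out e_def)
            qed
          qed
          moreover have "rmult \<Omega> e g = s"
          proof (rule ext)
            fix x show "rmult \<Omega> e g x = s x"
            proof (cases "x \<in> \<Omega>")
              case True
              have sx: "s x \<in> \<Omega>" using sO True by blast
              have "rmult \<Omega> e g x = g (e x)" using True by (simp add: rmult_in)
              also have "\<dots> = g (h (s x))" using ein[OF True] by simp
              also have "\<dots> = s x" using gh sx by blast
              finally show ?thesis .
            next
              case False
              then show ?thesis using PiE_arb[OF sE False] by (simp add: rmult_out)
            qed
          qed
          ultimately show ?thesis using eS gG unfolding setprod_def idempotents_def
            by (intro CollectI exI[of _ e] exI[of _ g]) auto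
        qed
      qed
    qed
  qed
next
  note fin = assms(1) and sg = assms(2)
  assume H: "\<forall>t \<in> \<Omega> \<rightarrow>\<^sub>E \<Omega>. rank \<Omega> t = k \<longrightarrow>
       gen_semigroup \<Omega> (G \<union> {t}) =
         setprod \<Omega> (idempotents \<Omega> (gen_semigroup \<Omega> (G \<union> {t}))) G"
  show "ordered_ut \<Omega> G k"
    unfolding ordered_ut_def
  proof (intro allI impI)
    fix a P
    assume A: "(\<forall>i<k. a i \<in> \<Omega>) \<and> inj_on a {0..<k} \<and> (\<forall>i<k. P i \<noteq> {}) \<and>
      (\<forall>i<k. \<forall>j<k. i \<noteq> j \<longrightarrow> P i \<inter> P j = {}) \<and> (\<Union>i<k. P i) = \<Omega>"
    then have aO: "\<And>i. i<k \<Longrightarrow> a i \<in> \<Omega>" and ainj: "inj_on a {0..<k}"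
      and Pne: "\<And>i. i<k \<Longrightarrow> P i \<noteq> {}"
      and Pdis: "\<And>i j. i<k \<Longrightarrow> j<k \<Longrightarrow> i \<noteq> j \<Longrightarrow> P i \<inter> P j = {}"
      and Pun: "(\<Union>i<k. P i) = \<Omega>" by auto
    define idx where "idx = (\<lambda>x. THE i. i < k \<and> x \<in> P i)"
    have idx: "\<And>i x. i < k \<Longrightarrow> x \<in> P i \<Longrightarrow> idx x = i"
    proof -
      fix i x assume i: "i < k" "x \<in> P i"
      show "idx x = i" unfolding idx_def
      proof (rule the_equality)
        show "i < k \<and> x \<in> P i" using i by simp
        fix j assume "j < k \<and> x \<in> P j"
        then show "j = i" using Pdis[of i j] i by blast
      qed
    qed
    define t where "t = (\<lambda>x\<in>\<Omega>. a (idx x))"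
    have tP: "\<And>i x. i < k \<Longrightarrow> x \<in> P i \<Longrightarrow> t x = a i"
    proof -
      fix i x assume i: "i < k" "x \<in> P i"
      then have "x \<in> \<Omega>" using Pun by blast
      then show "t x = a i" using idx[OF i] unfolding t_def by simp
    qed
    have inP: "\<And>x. x \<in> \<Omega> \<Longrightarrow> \<exists>i<k. x \<in> P i" using Pun by blast
    have tE: "t \<in> \<Omega> \<rightarrow>\<^sub>E \<Omega>"
    proof -
      have "\<forall>x\<in>\<Omega>. t x \<in> \<Omega>" using inP tP aO by metis
      then show ?thesis unfolding t_def by (auto simp: PiE_iff)
    qed
    have timg: "t ` \<Omega> = a ` {0..<k}"
    proof
      show "t ` \<Omega> \<subseteq> a ` {0..<k}" using inP tP by fastforce
      show "a ` {0..<k} \<subseteq> t ` \<Omega>"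
      proof
        fix y assume "y \<in> a ` {0..<k}"
        then obtain i where i: "i < k" "y = a i" by auto
        then obtain x where x: "x \<in> P i" using Pne by blast
        have xO: "x \<in> \<Omega>" using Pun x i(1) by blast
        have "t x = y" using tP[OF i(1) x] i(2) by simp
        then show "y \<in> t ` \<Omega>" using xO by blast
      qed
    qed
    have rk: "rank \<Omega> t = k" unfolding rank_def timg using card_image[OF ainj] by simp
    define S where "S = gen_semigroup \<Omega> (G \<union> {t})"
    have "t \<in> S" unfolding S_def by (auto intro: gen_semigroup.gen_base)
    then have "t \<in> setprod \<Omega> (idempotents \<Omega> S) G" using H tE rk unfolding S_def by blast
    then obtain e g where e: "e \<in> S" "rmult \<Omega> e e = e" and gG: "g \<in> G" and teg: "t = rmult \<Omega> e g"
      unfolding setprod_def idempotents_def by blast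
    have eE: "e \<in> \<Omega> \<rightarrow>\<^sub>E \<Omega>" using S_props[OF fin sg tE] e(1) unfolding S_def by blast
    obtain h where hG: "h \<in> G" and hg: "\<forall>x\<in>\<Omega>. h (g x) = x"
      using G_props(3)[OF sg gG] by blast
    have "\<forall>i<k. h (a i) \<in> P i"
    proof (intro allI impI)
      fix i assume i: "i < k"
      then obtain x where x: "x \<in> P i" using Pne by blast
      have xO: "x \<in> \<Omega>" using x i Pun by blast
      define z where "z = e x"
      have zO: "z \<in> \<Omega>" using eE xO unfolding z_def by (auto simp: PiE_iff)
      have ai: "a i = g z" using tP[OF i x] teg xO unfolding z_def by (simp add: rmult_in)
      have "e z = z" using fun_cong[OF e(2), of x] xO unfolding z_def by (simp add: rmult_in)
      then have tz: "t z = a i" using teg zO ai by (simp add: rmult_in)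
      obtain j where j: "j < k" "z \<in> P j" using inP zO by blast
      then have "a j = a i" using tP tz by metis
      then have "j = i" using ainj i j(1) unfolding inj_on_def by auto
      then have "z \<in> P i" using j by simp
      moreover have "h (a i) = z" using ai hg zO by simp
      ultimately show "h (a i) \<in> P i" by simp
    qed
    then show "\<exists>g\<in>G. \<forall>i<k. g (a i) \<in> P i" using hG by blast
  qed
qed

end
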